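(* Let $\lambda>1$, $s'\in(0,1]$, $r\in\mathbb{R}$, and consider the system $$x_{n+1}=s'y_n,\qquad y_{n+1}=x_n^{\lambda}e^{r-x_n},\qquad n\ge0,$$ with $(x_0,y_0)\in[0,\infty)^2$; equivalently $x_{n+1}=x_{n-1}^{\lambda}e^{a-x_{n-1}}$ for $n\ge1$ with $x_1=s'y_0$, where $a=r+\ln s'$. Let $f(u)=u^\lambda e^{a-u}$. (a) Every orbit in $[0,\infty)^2$ converges to $(0,0)$ if and only if $a<(\lambda-1)[1-\ln(\lambda-1)]$. (b) Assume $a>(\lambda-1)[1-\ln(\lambda-1)]$, and let $u^*<\bar u$ be the two positive fixed points of $f$. Then the positive fixed points of the scalar equation are $x^*=u^*$ and $\bar x=\bar u$, and every orbit with $(x_0,y_0)\in[0,u^* )\times[0,u^*/s')$ converges to $(0,0)$. (c) Assume $(\lambda-1)[1-\ln(\lambda-1)]<a\le\lambda-(\lambda-1)\ln\lambda$. If $x_0\in[u^*,\bar u]$ or $s'y_0\in[u^*,\bar u]$, then the corresponding orbit does not converge to $(0,0)$. (d) Assume $a>(\lambda-1)[1-\ln(\lambda-1)]$. Then the 2-periodic sequences $\{0,u^*,0,u^*,\dots\}$ and $\{u^*,0,u^*,0,\dots\}$ are solutions of $x_{n+1}=x_{n-1}^{\lambda}e^{a-x_{n-1}}$ and they are unstable: for every $\delta>0$ there are non-negative initial values $(x_0,x_1)$ within distance $\delta$ of $(0,u^* )$ (respectively of $(u^*,0)$) whose solution converges to $0$.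
   Context: For $\lambda>1$ and $a>(\lambda-1)[1-\ln(\lambda-1)]$ the map $f(u)=u^{\lambda}e^{a-u}$ has exactly two positive fixed points $u^*<\lambda-1<\bar u$; $u^*$ is called the Allee fixed point of $f$. *)

theory Defs
  imports "HOL-Analysis.Analysis"
begin

definition fmap :: "real \<Rightarrow> real \<Rightarrow> real \<Rightarrow> real" where
  "fmap lam a u = u powr lam * exp (a - u)"

definition allee_fp :: "real \<Rightarrow> real \<Rightarrow> real" where
  "allee_fp lam a = (THE u. 0 < u \<and> u < lam - 1 \<and> fmap lam a u = u)"

definition upper_fp :: "real \<Rightarrow> real \<Rightarrow> real" where
  "upper_fp lam a = (THE u. lam - 1 < u \<and> fmap lam a u = u)"

fun orbit :: "real \<Rightarrow> real \<Rightarrow> real \<Rightarrow> real \<Rightarrow> real \<Rightarrow> nat \<Rightarrow> real \<times> real" where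
  "orbit lam s r x0 y0 0 = (x0, y0)"
| "orbit lam s r x0 y0 (Suc n) =
     (let p = orbit lam s r x0 y0 n in (s * snd p, fst p powr lam * exp (r - fst p)))"

fun scal :: "real \<Rightarrow> real \<Rightarrow> real \<Rightarrow> real \<Rightarrow> nat \<Rightarrow> real" where
  "scal lam a x0 x1 0 = x0"
| "scal lam a x0 x1 (Suc 0) = x1"
| "scal lam a x0 x1 (Suc (Suc n)) = fmap lam a (scal lam a x0 x1 n)"

definition solves_scalar :: "real \<Rightarrow> real \<Rightarrow> (nat \<Rightarrow> real) \<Rightarrow> bool" where
  "solves_scalar lam a x \<longleftrightarrow> (\<forall>n\<ge>1. x (n + 1) = fmap lam a (x (n - 1)))"

end

theory Submission
  imports Defs
begin


lemma ln_strict: "0 < (x::real) \<Longrightarrow> x \<noteq> 1 \<Longrightarrow> ln x < x - 1"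
  using ln_le_minus_one[of x] ln_eq_minus_one[of x] by force

lemma mono_left:
  fixes c u v :: real
  assumes "0 < u" "u < v" "v \<le> c"
  shows "c * ln u - u < c * ln v - v"
proof -
  have "ln (u/v) < u/v - 1" using assms by (intro ln_strict) auto
  hence "ln u - ln v < u/v - 1" using assms by (simp add: ln_div)
  hence "c * (ln u - ln v) < c * (u/v - 1)" using assms by (intro mult_strict_left_mono) auto
  also have "c * (u/v - 1) = c * (u - v) / v" using assms by (simp add: field_simps)
  also have "\<dots> \<le> u - v"
  proof -
    have "c * (u - v) \<le> v * (u - v)" using assms by (intro mult_right_mono_neg) auto
    thus ?thesis using assms by (simp add: divide_le_eq mult.commute)
  qed
  finally show ?thesis by (simp add: algebra_simps)
qed

lemma mono_right:
  fixes c u v :: real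
  assumes "0 < c" "c \<le> u" "u < v"
  shows "c * ln v - v < c * ln u - u"
proof -
  have "ln (v/u) < v/u - 1" using assms by (intro ln_strict) auto
  hence "ln v - ln u < v/u - 1" using assms by (simp add: ln_div)
  hence "c * (ln v - ln u) < c * (v/u - 1)" using assms by (intro mult_strict_left_mono) auto
  also have "c * (v/u - 1) = c * (v - u) / u" using assms by (simp add: field_simps)
  also have "\<dots> \<le> v - u"
  proof -
    have "c * (v - u) \<le> u * (v - u)" using assms by (intro mult_right_mono) auto
    thus ?thesis using assms by (simp add: divide_le_eq mult.commute)
  qed
  finally show ?thesis by (simp add: algebra_simps)
qed

lemma fmap_pos_exp: "0 < u \<Longrightarrow> fmap lam a u = exp (lam * ln u + a - u)"
  by (simp add: fmap_def powr_def exp_add exp_diff)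

lemma fmap_zero: "fmap lam a 0 = 0" by (simp add: fmap_def)
lemma fmap_nonneg: "0 \<le> fmap lam a u" by (simp add: fmap_def)

lemma fmap_less_iff: "0 < u \<Longrightarrow> fmap lam a u < u \<longleftrightarrow> (lam - 1) * ln u + a - u < 0"
proof -
  assume u: "0 < u"
  have "fmap lam a u < u \<longleftrightarrow> exp (lam * ln u + a - u) < exp (ln u)" using u by (simp add: fmap_pos_exp)
  also have "\<dots> \<longleftrightarrow> lam * ln u + a - u < ln u" by simp
  finally show ?thesis by (simp add: algebra_simps)
qed

lemma fmap_eq_iff: "0 < u \<Longrightarrow> fmap lam a u = u \<longleftrightarrow> (lam - 1) * ln u + a - u = 0"
proof -
  assume u: "0 < u"
  have "fmap lam a u = u \<longleftrightarrow> exp (lam * ln u + a - u) = exp (ln u)" using u by (simp add: fmap_pos_exp)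
  also have "\<dots> \<longleftrightarrow> lam * ln u + a - u = ln u" by simp
  finally show ?thesis by (simp add: algebra_simps)
qed

lemma fmap_isCont: "0 < z \<Longrightarrow> isCont (fmap lam a) z"
  unfolding fmap_def by (intro continuous_intros) auto

lemma fmap_mono: assumes "0 \<le> u" "u \<le> v" "v \<le> lam" shows "fmap lam a u \<le> fmap lam a v"
proof (cases "u = 0")
  case True thus ?thesis by (simp add: fmap_zero fmap_nonneg)
next
  case False
  hence u: "0 < u" using assms by auto
  show ?thesis
  proof (cases "u = v")
    case False
    hence "lam * ln u - u < lam * ln v - v" using assms u by (intro mono_left) auto
    thus ?thesis using u assms by (simp add: fmap_pos_exp)
  qed simp
qed

definition hh :: "real \<Rightarrow> real \<Rightarrow> real \<Rightarrow> real" where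
  "hh lam a u = (lam - 1) * ln u + a - u"

lemma hh_cont: "0 < e \<Longrightarrow> continuous_on {e..M} (hh lam a)"
  unfolding hh_def by (intro continuous_intros) auto

lemma exists_zeros:
  fixes lam a :: real
  assumes lam: "lam > 1" and aT: "a > (lam - 1) * (1 - ln (lam - 1))"
  shows "\<exists>u1. 0 < u1 \<and> u1 < lam - 1 \<and> hh lam a u1 = 0"
    and "\<exists>u2. lam - 1 < u2 \<and> hh lam a u2 = 0"
proof -
  define c where "c = lam - 1"
  have c: "c > 0" using lam c_def by simp
  have hc: "hh lam a c > 0" using aT unfolding hh_def c_def by (simp add: algebra_simps)
  define e where "e = min (exp (-(\<bar>a\<bar>+1)/c)) (c/2)"
  have e: "0 < e" "e < c" using c unfolding e_def by auto
  have "ln e \<le> ln (exp (-(\<bar>a\<bar>+1)/c))" using e unfolding e_def by (subst ln_le_cancel_iff) auto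
  hence "ln e \<le> -(\<bar>a\<bar>+1)/c" by simp
  hence "c * ln e \<le> c * (-(\<bar>a\<bar>+1)/c)" using c by (intro mult_left_mono) auto
  hence "c * ln e \<le> -(\<bar>a\<bar>+1)" using c by simp
  hence he: "hh lam a e \<le> 0" using e unfolding hh_def c_def[symmetric]
    using abs_ge_self[of a] abs_ge_self[of "c * ln(2*c)"] c by linarith
  obtain u1 where u1: "e \<le> u1" "u1 \<le> c" "hh lam a u1 = 0"
    using IVT'[of "hh lam a" e 0 c] he hc e hh_cont[of e c lam a] by auto
  have "u1 \<noteq> c" using u1 hc by auto
  thus "\<exists>u1. 0 < u1 \<and> u1 < lam - 1 \<and> hh lam a u1 = 0" using u1 e c_def by (intro exI[of _ u1]) auto
  define M where "M = 2*(\<bar>c * ln(2*c)\<bar> + \<bar>a\<bar> + c) + c + 1"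
  have M: "M > c" "M > 0" using c unfolding M_def by auto
  have "ln (M/(2*c)) \<le> M/(2*c) - 1" using M c by (intro ln_le_minus_one) auto
  hence "ln M \<le> ln (2*c) + M/(2*c) - 1" using M c by (simp add: ln_div)
  hence "c * ln M \<le> c * (ln (2*c) + M/(2*c) - 1)" using c by (intro mult_left_mono) auto
  also have "\<dots> = c * ln (2*c) + M/2 - c" using c by (simp add: field_simps)
  finally have "c * ln M \<le> c * ln (2*c) + M/2 - c" .
  moreover have "M/2 \<ge> \<bar>c * ln(2*c)\<bar> + \<bar>a\<bar> + c" unfolding M_def using c by simp
  ultimately have hM: "hh lam a M \<le> 0" unfolding hh_def c_def[symmetric]
    using abs_ge_self[of a] abs_ge_self[of "c * ln(2*c)"] c by linarith
  obtain u2 where u2: "c \<le> u2" "u2 \<le> M" "hh lam a u2 = 0"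
    using IVT2'[of "hh lam a" M 0 c] hM hc M hh_cont[of c M lam a] c by auto
  have "u2 \<noteq> c" using u2 hc by auto
  thus "\<exists>u2. lam - 1 < u2 \<and> hh lam a u2 = 0" using u2 c_def by (intro exI[of _ u2]) auto
qed

lemma hh_less_iff: "0 < u \<Longrightarrow> fmap lam a u < u \<longleftrightarrow> hh lam a u < 0"
  by (simp add: fmap_less_iff hh_def)
lemma hh_eq_iff: "0 < u \<Longrightarrow> fmap lam a u = u \<longleftrightarrow> hh lam a u = 0"
  by (simp add: fmap_eq_iff hh_def)
lemma hh_greater_iff: "0 < u \<Longrightarrow> u < fmap lam a u \<longleftrightarrow> hh lam a u > 0"
  using hh_less_iff[of u lam a] hh_eq_iff[of u lam a] by linarith

lemma hh_left: "lam > 1 \<Longrightarrow> 0 < u \<Longrightarrow> u < v \<Longrightarrow> v \<le> lam - 1 \<Longrightarrow> hh lam a u < hh lam a v"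
  using mono_left[of u v "lam - 1"] unfolding hh_def by auto
lemma hh_right: "lam > 1 \<Longrightarrow> lam - 1 \<le> u \<Longrightarrow> u < v \<Longrightarrow> hh lam a v < hh lam a u"
  using mono_right[of "lam - 1" u v] unfolding hh_def by auto

lemma hh_peak: "lam > 1 \<Longrightarrow> 0 < u \<Longrightarrow> u \<noteq> lam - 1 \<Longrightarrow> hh lam a u < a - (lam - 1) * (1 - ln (lam - 1))"
proof -
  assume lam: "lam > 1" and u: "0 < u" "u \<noteq> lam - 1"
  have "hh lam a (lam - 1) = a - (lam - 1) * (1 - ln (lam - 1))" unfolding hh_def by (simp add: algebra_simps)
  moreover have "hh lam a u < hh lam a (lam - 1)"
  proof (cases "u < lam - 1")
    case True thus ?thesis using hh_left[OF lam u(1) True] by simp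
  next
    case False thus ?thesis using hh_right[OF lam, of "lam - 1" u] u by simp
  qed
  ultimately show ?thesis by simp
qed

lemma fp_structure:
  fixes lam a :: real
  assumes lam: "lam > 1" and aT: "a > (lam - 1) * (1 - ln (lam - 1))"
  defines "us \<equiv> allee_fp lam a" and "ub \<equiv> upper_fp lam a"
  shows "0 < us" "us < lam - 1" "lam - 1 < ub" "fmap lam a us = us" "fmap lam a ub = ub"
    "\<And>u. 0 < u \<Longrightarrow> u < us \<Longrightarrow> fmap lam a u < u"
    "\<And>u. us < u \<Longrightarrow> u < ub \<Longrightarrow> u < fmap lam a u"
    "\<And>u. 0 < u \<Longrightarrow> fmap lam a u = u \<Longrightarrow> u = us \<or> u = ub"
proof -
  obtain u1 where u1: "0 < u1" "u1 < lam - 1" "hh lam a u1 = 0" using exists_zeros(1)[OF lam aT] by blast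
  obtain u2 where u2: "lam - 1 < u2" "hh lam a u2 = 0" using exists_zeros(2)[OF lam aT] by blast
  have u2p: "0 < u2" using u2 lam by simp
  have zeros: "u = u1 \<or> u = u2" if "0 < u" "hh lam a u = 0" for u
  proof (rule ccontr)
    assume ne: "\<not> (u = u1 \<or> u = u2)"
    consider "u < u1" | "u1 < u" "u \<le> lam - 1" | "lam - 1 \<le> u" "u < u2" | "u2 < u"
      using ne by linarith
    thus False
    proof cases
      case 1 thus False using hh_left[OF lam that(1) 1, of a] u1 that by simp
    next
      case 2 thus False using hh_left[OF lam u1(1) 2, of a] u1 that by simp
    next
      case 3 thus False using hh_right[OF lam 3, of a] u2 that by simp
    next
      case 4 thus False using hh_right[OF lam _ 4, of a] u2 that by simp
    qed
  qed
  have "us = u1" unfolding us_def allee_fp_def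
  proof (rule the_equality)
    show "0 < u1 \<and> u1 < lam - 1 \<and> fmap lam a u1 = u1" using u1 hh_eq_iff[of u1] by simp
  next
    fix u assume "0 < u \<and> u < lam - 1 \<and> fmap lam a u = u"
    thus "u = u1" using zeros[of u] hh_eq_iff[of u] u2 by auto
  qed
  have "ub = u2" unfolding ub_def upper_fp_def
  proof (rule the_equality)
    show "lam - 1 < u2 \<and> fmap lam a u2 = u2" using u2 u2p hh_eq_iff[of u2] by simp
  next
    fix u assume "lam - 1 < u \<and> fmap lam a u = u"
    thus "u = u2" using zeros[of u] hh_eq_iff[of u] u1 lam by auto
  qed
  show "0 < us" "us < lam - 1" "lam - 1 < ub" using \<open>us = u1\<close> \<open>ub = u2\<close> u1 u2 by auto
  show "fmap lam a us = us" "fmap lam a ub = ub"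
    using \<open>us = u1\<close> \<open>ub = u2\<close> u1 u2 u2p hh_eq_iff by auto
  show "fmap lam a u < u" if "0 < u" "u < us" for u
    using hh_left[OF lam that(1), of u1 a] that u1 \<open>us = u1\<close> hh_less_iff[of u] by simp
  show "u < fmap lam a u" if "us < u" "u < ub" for u
  proof -
    have up: "0 < u" using that u1 \<open>us = u1\<close> by simp
    have "hh lam a u > 0"
    proof (cases "u \<le> lam - 1")
      case True thus ?thesis using hh_left[OF lam u1(1), of u a] that u1 \<open>us = u1\<close> by simp
    next
      case False thus ?thesis using hh_right[OF lam, of u u2 a] that u2 \<open>ub = u2\<close> by simp
    qed
    thus ?thesis using hh_greater_iff[OF up] by simp
  qed
  show "u = us \<or> u = ub" if "0 < u" "fmap lam a u = u" for u
    using zeros[of u] that hh_eq_iff[of u] \<open>us = u1\<close> \<open>ub = u2\<close> by auto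
qed

lemma conv0:
  fixes Z :: "nat \<Rightarrow> real" and F :: "real \<Rightarrow> real"
  assumes step: "\<And>k. Z (Suc k) = F (Z k)" and z0: "0 \<le> Z 0" "Z 0 < B"
    and Fnn: "\<And>z. 0 \<le> z \<Longrightarrow> 0 \<le> F z" and F0: "F 0 = 0"
    and Fless: "\<And>z. 0 < z \<Longrightarrow> z < B \<Longrightarrow> F z < z"
    and Fcont: "\<And>z. 0 < z \<Longrightarrow> isCont F z"
  shows "Z \<longlonglongrightarrow> 0"
proof -
  have inv: "0 \<le> Z k \<and> Z k < B \<and> Z (Suc k) \<le> Z k" for k
  proof (induction k)
    case 0 show ?case using z0 step[of 0] Fless[of "Z 0"] F0 by (cases "Z 0 = 0") auto
  next
    case (Suc k)
    have a: "0 \<le> Z (Suc k)" using Suc step Fnn by simp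
    have b: "Z (Suc k) < B" using Suc by simp
    have c: "Z (Suc (Suc k)) \<le> Z (Suc k)"
      using a b step[of "Suc k"] Fless[of "Z (Suc k)"] F0 by (cases "Z (Suc k) = 0") auto
    show ?case using a b c by simp
  qed
  have "decseq Z" using inv by (intro decseq_SucI) auto
  then obtain L where L: "Z \<longlonglongrightarrow> L" "\<forall>i. L \<le> Z i" using decseq_convergent[of Z 0] inv by blast
  have L0: "0 \<le> L" using L(1) inv by (intro LIMSEQ_le_const[OF L(1)]) auto
  have LB: "L < B" using L(2)[rule_format, of 0] z0 by linarith
  show ?thesis
  proof (cases "L = 0")
    case True thus ?thesis using L by simp
  next
    case False
    hence Lp: "0 < L" using L0 by simp
    have "(\<lambda>k. Z (Suc k)) \<longlonglongrightarrow> L" using L(1) by (rule LIMSEQ_Suc)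
    hence "(\<lambda>k. F (Z k)) \<longlonglongrightarrow> L" using step by simp
    moreover have "(\<lambda>k. F (Z k)) \<longlonglongrightarrow> F L" using isCont_tendsto_compose[OF Fcont[OF Lp] L(1)] .
    ultimately have "F L = L" using LIMSEQ_unique by blast
    thus ?thesis using Fless[OF Lp LB] by simp
  qed
qed

lemma even_odd_lim:
  fixes X :: "nat \<Rightarrow> real"
  assumes "(\<lambda>k. X (2*k)) \<longlonglongrightarrow> 0" "(\<lambda>k. X (2*k+1)) \<longlonglongrightarrow> 0"
  shows "X \<longlonglongrightarrow> 0"
proof (rule LIMSEQ_I)
  fix r :: real assume r: "0 < r"
  obtain N1 where N1: "\<And>k. k \<ge> N1 \<Longrightarrow> norm (X (2*k) - 0) < r" using LIMSEQ_D[OF assms(1) r] by blast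
  obtain N2 where N2: "\<And>k. k \<ge> N2 \<Longrightarrow> norm (X (2*k+1) - 0) < r" using LIMSEQ_D[OF assms(2) r] by blast
  show "\<exists>N. \<forall>n\<ge>N. norm (X n - 0) < r"
  proof (intro exI allI impI)
    fix n assume n: "2 * (N1 + N2) \<le> n"
    show "norm (X n - 0) < r"
    proof (cases "even n")
      case True then obtain k where "n = 2*k" by blast
      thus ?thesis using N1[of k] n by simp
    next
      case False then obtain k where "n = 2*k+1" using oddE by blast
      thus ?thesis using N2[of k] n by simp
    qed
  qed
qed

lemma two_step_conv:
  fixes X :: "nat \<Rightarrow> real" and F :: "real \<Rightarrow> real"
  assumes step: "\<And>k. X (Suc (Suc k)) = F (X k)" and x0: "0 \<le> X 0" "X 0 < B" and x1: "0 \<le> X 1" "X 1 < B"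
    and Fnn: "\<And>z. 0 \<le> z \<Longrightarrow> 0 \<le> F z" and F0: "F 0 = 0"
    and Fless: "\<And>z. 0 < z \<Longrightarrow> z < B \<Longrightarrow> F z < z"
    and Fcont: "\<And>z. 0 < z \<Longrightarrow> isCont F z"
  shows "X \<longlonglongrightarrow> 0"
proof (rule even_odd_lim)
  show "(\<lambda>k. X (2*k)) \<longlonglongrightarrow> 0"
  proof (rule conv0[where F=F and B=B])
    show "X (2 * Suc k) = F (X (2 * k))" for k using step[of "2*k"] by simp
  qed (use x0 Fnn F0 Fless Fcont in auto)
  show "(\<lambda>k. X (2*k+1)) \<longlonglongrightarrow> 0"
  proof (rule conv0[where F=F and B=B])
    show "X (2 * Suc k + 1) = F (X (2 * k + 1))" for k using step[of "2*k+1"] by simp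
  qed (use x1 Fnn F0 Fless Fcont in auto)
qed

lemma orbit_fst_step:
  assumes "0 < s" "a = r + ln s"
  shows "fst (orbit lam s r x0 y0 (Suc (Suc n))) = fmap lam a (fst (orbit lam s r x0 y0 n))"
proof -
  define x where "x = fst (orbit lam s r x0 y0 n)"
  have e: "s * exp (r - x) = exp (a - x)" using assms by (simp add: exp_diff exp_add)
  have "fst (orbit lam s r x0 y0 (Suc (Suc n))) = s * (x powr lam * exp (r - x))"
    unfolding x_def by (simp add: Let_def)
  also have "\<dots> = x powr lam * (s * exp (r - x))" by (simp only: ac_simps)
  also have "\<dots> = fmap lam a x" using e by (simp add: fmap_def)
  finally show ?thesis unfolding x_def .
qed

lemma orbit_snd_step:
  assumes "0 < s" "a = r + ln s"
  shows "snd (orbit lam s r x0 y0 (Suc n)) = fst (orbit lam s r x0 y0 (Suc (Suc n))) / s"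
  using assms by (simp add: Let_def)

lemma orbit_conv:
  assumes s: "0 < s" and a: "a = r + ln s" and X: "(\<lambda>n. fst (orbit lam s r x0 y0 n)) \<longlonglongrightarrow> 0"
  shows "orbit lam s r x0 y0 \<longlonglongrightarrow> (0, 0)"
proof -
  have "(\<lambda>n. fst (orbit lam s r x0 y0 (Suc (Suc n))) / s) \<longlonglongrightarrow> 0 / s"
    using LIMSEQ_Suc[OF LIMSEQ_Suc[OF X]] by (intro tendsto_divide) (use s in auto)
  hence "(\<lambda>n. snd (orbit lam s r x0 y0 (Suc n))) \<longlonglongrightarrow> 0" 
    unfolding orbit_snd_step[OF s a, symmetric] by (simp del: orbit.simps)
  hence Y: "(\<lambda>n. snd (orbit lam s r x0 y0 n)) \<longlonglongrightarrow> 0" by (rule LIMSEQ_imp_Suc)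
  have "(\<lambda>n. (fst (orbit lam s r x0 y0 n), snd (orbit lam s r x0 y0 n))) \<longlonglongrightarrow> (0, 0)"
    by (rule tendsto_Pair[OF X Y])
  thus ?thesis by simp
qed

lemma orbit_not_conv:
  assumes lb: "\<And>k. c \<le> fst (orbit lam s r x0 y0 (2*k + j))" and c: "c > 0"
  shows "\<not> (orbit lam s r x0 y0 \<longlonglongrightarrow> (0, 0))"
proof
  assume "orbit lam s r x0 y0 \<longlonglongrightarrow> (0, 0)"
  hence "(\<lambda>n. fst (orbit lam s r x0 y0 n)) \<longlonglongrightarrow> fst (0::real, 0::real)" by (rule tendsto_fst)
  hence X: "(\<lambda>n. fst (orbit lam s r x0 y0 n)) \<longlonglongrightarrow> 0" by simp
  have "strict_mono (\<lambda>k. 2*k + j)" by (rule strict_monoI) auto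
  from LIMSEQ_subseq_LIMSEQ[OF X this] have "(\<lambda>k. fst (orbit lam s r x0 y0 (2*k + j))) \<longlonglongrightarrow> 0"
    by (simp add: o_def)
  hence "c \<le> 0" using lb by (intro LIMSEQ_le_const) auto
  thus False using c by simp
qed

lemma orbit_01: "fst (orbit lam s r x0 y0 0) = x0" "fst (orbit lam s r x0 y0 (Suc 0)) = s * y0"
  by (simp_all add: Let_def)

lemma orbit_conv_region:
  assumes s: "0 < s" and a: "a = r + ln s" and lam: "lam > 1"
    and x0: "0 \<le> x0" "x0 < B" and y0: "0 \<le> s * y0" "s * y0 < B"
    and Fless: "\<And>z. 0 < z \<Longrightarrow> z < B \<Longrightarrow> fmap lam a z < z"
  shows "orbit lam s r x0 y0 \<longlonglongrightarrow> (0, 0)"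
proof (rule orbit_conv[OF s a])
  show "(\<lambda>n. fst (orbit lam s r x0 y0 n)) \<longlonglongrightarrow> 0"
  proof (rule two_step_conv[where F="fmap lam a" and B=B])
    show "fst (orbit lam s r x0 y0 (Suc (Suc k))) = fmap lam a (fst (orbit lam s r x0 y0 k))" for k
      by (rule orbit_fst_step[OF s a])
  qed (use x0 y0 Fless fmap_nonneg fmap_zero fmap_isCont orbit_01 in auto)
qed

lemma orbit_invariant:
  assumes s: "0 < s" and a: "a = r + ln s"
    and inv: "\<And>z. z \<in> S \<Longrightarrow> fmap lam a z \<in> S" and j: "fst (orbit lam s r x0 y0 j) \<in> S"
  shows "fst (orbit lam s r x0 y0 (2*k + j)) \<in> S"
proof (induction k)
  case 0 thus ?case using j by simp
next
  case (Suc k)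
  have "fst (orbit lam s r x0 y0 (2*Suc k + j)) = fmap lam a (fst (orbit lam s r x0 y0 (2*k + j)))"
    using orbit_fst_step[OF s a, of lam x0 y0 "2*k+j"] by simp
  thus ?case using Suc inv by simp
qed

lemma scal_conv:
  assumes lam: "lam > 1" and x0: "0 \<le> x0" "x0 < B" and x1: "0 \<le> x1" "x1 < B"
    and Fless: "\<And>z. 0 < z \<Longrightarrow> z < B \<Longrightarrow> fmap lam a z < z"
  shows "scal lam a x0 x1 \<longlonglongrightarrow> 0"
  by (rule two_step_conv[where F="fmap lam a" and B=B])
     (use x0 x1 Fless fmap_nonneg fmap_zero fmap_isCont in auto)


theorem mainTheorem6:
  fixes lam s r a :: real
  assumes lam: "lam > 1" and s: "0 < s" "s \<le> 1"
    and a_def: "a = r + ln s"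
  shows
    "((\<forall>x0 y0. x0 \<ge> 0 \<longrightarrow> y0 \<ge> 0 \<longrightarrow> (orbit lam s r x0 y0 \<longlonglongrightarrow> (0, 0)))
        \<longleftrightarrow> a < (lam - 1) * (1 - ln (lam - 1)))
   \<and> (a > (lam - 1) * (1 - ln (lam - 1)) \<longrightarrow>
        allee_fp lam a < upper_fp lam a
      \<and> {x. x > 0 \<and> solves_scalar lam a (\<lambda>_. x)} = {allee_fp lam a, upper_fp lam a}
      \<and> (\<forall>x0 y0. 0 \<le> x0 \<longrightarrow> x0 < allee_fp lam a \<longrightarrow> 0 \<le> y0 \<longrightarrow> y0 < allee_fp lam a / s \<longrightarrow>
            (orbit lam s r x0 y0 \<longlonglongrightarrow> (0, 0))))
   \<and> ((lam - 1) * (1 - ln (lam - 1)) < a \<and> a \<le> lam - (lam - 1) * ln lam \<longrightarrow>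
        (\<forall>x0 y0. 0 \<le> x0 \<longrightarrow> 0 \<le> y0 \<longrightarrow>
           (x0 \<in> {allee_fp lam a..upper_fp lam a} \<or> s * y0 \<in> {allee_fp lam a..upper_fp lam a}) \<longrightarrow>
           \<not> (orbit lam s r x0 y0 \<longlonglongrightarrow> (0, 0))))
   \<and> (a > (lam - 1) * (1 - ln (lam - 1)) \<longrightarrow>
        solves_scalar lam a (\<lambda>n. if even n then 0 else allee_fp lam a)
      \<and> solves_scalar lam a (\<lambda>n. if even n then allee_fp lam a else 0)
      \<and> (\<forall>\<delta>>0. \<exists>x0 x1. 0 \<le> x0 \<and> 0 \<le> x1 \<and> dist (x0, x1) (0, allee_fp lam a) < \<delta>
                 \<and> (scal lam a x0 x1 \<longlonglongrightarrow> 0))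
      \<and> (\<forall>\<delta>>0. \<exists>x0 x1. 0 \<le> x0 \<and> 0 \<le> x1 \<and> dist (x0, x1) (allee_fp lam a, 0) < \<delta>
                 \<and> (scal lam a x0 x1 \<longlonglongrightarrow> 0)))"
  proof -
  define T where "T = (lam - 1) * (1 - ln (lam - 1))"
  have s0: "0 < s" using s by simp
  have A: "(\<forall>x0 y0. x0 \<ge> 0 \<longrightarrow> y0 \<ge> 0 \<longrightarrow> (orbit lam s r x0 y0 \<longlonglongrightarrow> (0, 0))) \<longleftrightarrow> a < T"
  proof
    assume all: "\<forall>x0 y0. x0 \<ge> 0 \<longrightarrow> y0 \<ge> 0 \<longrightarrow> (orbit lam s r x0 y0 \<longlonglongrightarrow> (0, 0))"
    show "a < T"
    proof (rule ccontr)
      assume "\<not> a < T"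
      have "\<exists>p>0. fmap lam a p = p"
      proof (cases "a = T")
        case True
        have "hh lam a (lam - 1) = 0" unfolding hh_def using True T_def by (simp add: algebra_simps)
        thus ?thesis using hh_eq_iff[of "lam - 1" lam a] lam by (intro exI[of _ "lam - 1"]) auto
      next
        case False
        hence "a > T" using \<open>\<not> a < T\<close> by simp
        thus ?thesis using fp_structure[OF lam] T_def by blast
      qed
      then obtain p where p: "p > 0" "fmap lam a p = p" by blast
      have "fst (orbit lam s r p (p/s) (2*k + 0)) \<in> {p}" for k
        by (rule orbit_invariant[OF s0 a_def]) (use p in \<open>auto simp: orbit_01\<close>)
      hence "\<not> (orbit lam s r p (p/s) \<longlonglongrightarrow> (0, 0))"
        by (intro orbit_not_conv[where c=p and j=0]) (use p in auto)
      moreover have "p/s \<ge> 0" using p s0 by simp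
      ultimately show False using all p by auto
    qed
  next
    assume aT: "a < T"
    have Fl: "fmap lam a z < z" if "0 < z" for z
    proof -
      have "hh lam a z < 0"
      proof (cases "z = lam - 1")
        case True
        have "hh lam a z = a - T" unfolding hh_def True T_def by (simp add: algebra_simps)
        thus ?thesis using aT by simp
      next
        case False thus ?thesis using hh_peak[OF lam that False, of a] aT T_def by simp
      qed
      thus ?thesis using hh_less_iff[OF that] by simp
    qed
    show "\<forall>x0 y0. x0 \<ge> 0 \<longrightarrow> y0 \<ge> 0 \<longrightarrow> (orbit lam s r x0 y0 \<longlonglongrightarrow> (0, 0))"
    proof (intro allI impI)
      fix x0 y0 :: real assume x0: "x0 \<ge> 0" and y0: "y0 \<ge> 0"
      show "orbit lam s r x0 y0 \<longlonglongrightarrow> (0, 0)"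
        by (rule orbit_conv_region[OF s0 a_def lam, where B="max x0 (s*y0) + 1"])
           (use x0 y0 s0 Fl in auto)
    qed
  qed
  have B: "a > T \<longrightarrow>
        allee_fp lam a < upper_fp lam a
      \<and> {x. x > 0 \<and> solves_scalar lam a (\<lambda>_. x)} = {allee_fp lam a, upper_fp lam a}
      \<and> (\<forall>x0 y0. 0 \<le> x0 \<longrightarrow> x0 < allee_fp lam a \<longrightarrow> 0 \<le> y0 \<longrightarrow> y0 < allee_fp lam a / s \<longrightarrow>
            (orbit lam s r x0 y0 \<longlonglongrightarrow> (0, 0)))"
  proof
    assume aT: "a > T"
    note fs = fp_structure[OF lam aT[unfolded T_def]]
    have sc: "solves_scalar lam a (\<lambda>_. x) \<longleftrightarrow> fmap lam a x = x" for x
      unfolding solves_scalar_def by (metis order_refl)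
    show "allee_fp lam a < upper_fp lam a
      \<and> {x. x > 0 \<and> solves_scalar lam a (\<lambda>_. x)} = {allee_fp lam a, upper_fp lam a}
      \<and> (\<forall>x0 y0. 0 \<le> x0 \<longrightarrow> x0 < allee_fp lam a \<longrightarrow> 0 \<le> y0 \<longrightarrow> y0 < allee_fp lam a / s \<longrightarrow>
            (orbit lam s r x0 y0 \<longlonglongrightarrow> (0, 0)))"
    proof (intro conjI allI impI)
      show "allee_fp lam a < upper_fp lam a" using fs by linarith
      show "{x. x > 0 \<and> solves_scalar lam a (\<lambda>_. x)} = {allee_fp lam a, upper_fp lam a}"
        unfolding sc using fs by auto
      fix x0 y0 :: real assume x0: "0 \<le> x0" "x0 < allee_fp lam a" and y0: "0 \<le> y0" "y0 < allee_fp lam a / s"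
      have "s * y0 < allee_fp lam a" using y0 s0 by (simp add: less_divide_eq mult.commute)
      thus "orbit lam s r x0 y0 \<longlonglongrightarrow> (0, 0)"
        by (intro orbit_conv_region[OF s0 a_def lam, where B="allee_fp lam a"])
           (use x0 y0 s0 fs in auto)
    qed
  qed
  have C: "T < a \<and> a \<le> lam - (lam - 1) * ln lam \<longrightarrow>
        (\<forall>x0 y0. 0 \<le> x0 \<longrightarrow> 0 \<le> y0 \<longrightarrow>
           (x0 \<in> {allee_fp lam a..upper_fp lam a} \<or> s * y0 \<in> {allee_fp lam a..upper_fp lam a}) \<longrightarrow>
           \<not> (orbit lam s r x0 y0 \<longlonglongrightarrow> (0, 0)))"
  proof (rule impI)
    assume h: "T < a \<and> a \<le> lam - (lam - 1) * ln lam"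
    note fs = fp_structure[OF lam h[unfolded T_def, THEN conjunct1]]
    define us where "us = allee_fp lam a"
    define ub where "ub = upper_fp lam a"
    have ubl: "ub \<le> lam"
    proof (rule ccontr)
      assume "\<not> ub \<le> lam"
      hence "lam < fmap lam a lam" using fs(7)[of lam] fs(2) unfolding ub_def by simp
      hence "hh lam a lam > 0" using hh_greater_iff[of lam lam a] lam by simp
      thus False using h unfolding hh_def by (simp add: algebra_simps)
    qed
    have inv: "fmap lam a z \<in> {us..ub}" if "z \<in> {us..ub}" for z
    proof -
      have "fmap lam a us \<le> fmap lam a z" using that fs ubl unfolding us_def ub_def
        by (intro fmap_mono) auto
      moreover have "fmap lam a z \<le> fmap lam a ub" using that fs ubl unfolding us_def ub_def
        by (intro fmap_mono) auto
      ultimately show ?thesis using fs unfolding us_def ub_def by auto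
    qed
    show "\<forall>x0 y0. 0 \<le> x0 \<longrightarrow> 0 \<le> y0 \<longrightarrow>
           (x0 \<in> {allee_fp lam a..upper_fp lam a} \<or> s * y0 \<in> {allee_fp lam a..upper_fp lam a}) \<longrightarrow>
           \<not> (orbit lam s r x0 y0 \<longlonglongrightarrow> (0, 0))"
    proof (intro allI impI)
      fix x0 y0 :: real
      assume "x0 \<in> {allee_fp lam a..upper_fp lam a} \<or> s * y0 \<in> {allee_fp lam a..upper_fp lam a}"
      then obtain j where j: "fst (orbit lam s r x0 y0 j) \<in> {us..ub}"
        unfolding us_def ub_def by (metis orbit_01)
      have "fst (orbit lam s r x0 y0 (2*k + j)) \<in> {us..ub}" for k
        by (rule orbit_invariant[OF s0 a_def inv j])
      thus "\<not> (orbit lam s r x0 y0 \<longlonglongrightarrow> (0, 0))"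
        by (intro orbit_not_conv[where c=us and j=j]) (use fs in \<open>auto simp: us_def\<close>)
    qed
  qed
  have D: "a > T \<longrightarrow>
        solves_scalar lam a (\<lambda>n. if even n then 0 else allee_fp lam a)
      \<and> solves_scalar lam a (\<lambda>n. if even n then allee_fp lam a else 0)
      \<and> (\<forall>\<delta>>0. \<exists>x0 x1. 0 \<le> x0 \<and> 0 \<le> x1 \<and> dist (x0, x1) (0, allee_fp lam a) < \<delta>
                 \<and> (scal lam a x0 x1 \<longlonglongrightarrow> 0))
      \<and> (\<forall>\<delta>>0. \<exists>x0 x1. 0 \<le> x0 \<and> 0 \<le> x1 \<and> dist (x0, x1) (allee_fp lam a, 0) < \<delta>
                 \<and> (scal lam a x0 x1 \<longlonglongrightarrow> 0))"
  proof
    assume aT: "a > T"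
    note fs = fp_structure[OF lam aT[unfolded T_def]]
    define us where "us = allee_fp lam a"
    have usp: "0 < us" and fus: "fmap lam a us = us" using fs unfolding us_def by auto
    have par: "even (n + 1) \<longleftrightarrow> even (n - 1)" if "n \<ge> 1" for n :: nat
      using that by (cases n) auto
    have Fl: "\<And>z. 0 < z \<Longrightarrow> z < us \<Longrightarrow> fmap lam a z < z" using fs unfolding us_def by auto
    have s1: "solves_scalar lam a (\<lambda>n. if even n then 0 else us)"
      unfolding solves_scalar_def using par fus fmap_zero by auto
    have s2: "solves_scalar lam a (\<lambda>n. if even n then us else 0)"
      unfolding solves_scalar_def using par fus fmap_zero by auto
    have d1: "\<exists>x0 x1. 0 \<le> x0 \<and> 0 \<le> x1 \<and> dist (x0, x1) (0, us) < \<delta> \<and> (scal lam a x0 x1 \<longlonglongrightarrow> 0)"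
      if "\<delta> > 0" for \<delta>
    proof -
      define e where "e = min (\<delta>/2) (us/2)"
      have e: "0 < e" "e < \<delta>" "e < us" using that usp unfolding e_def by auto
      have c1: "dist (0, us - e) (0, us) < \<delta>" using e by (simp add: dist_Pair_Pair dist_real_def)
      have c2: "scal lam a (0) (us - e) \<longlonglongrightarrow> 0" by (rule scal_conv[OF lam, where B=us]) (use e usp Fl in auto)
      show ?thesis using c1 c2 e by (intro exI[of _ "0"] exI[of _ "us - e"]) auto
    qed
    have d2: "\<exists>x0 x1. 0 \<le> x0 \<and> 0 \<le> x1 \<and> dist (x0, x1) (us, 0) < \<delta> \<and> (scal lam a x0 x1 \<longlonglongrightarrow> 0)"
      if "\<delta> > 0" for \<delta>
    proof -
      define e where "e = min (\<delta>/2) (us/2)"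
      have e: "0 < e" "e < \<delta>" "e < us" using that usp unfolding e_def by auto
      have c1: "dist (us - e, 0) (us, 0) < \<delta>" using e by (simp add: dist_Pair_Pair dist_real_def)
      have c2: "scal lam a (us - e) (0) \<longlonglongrightarrow> 0" by (rule scal_conv[OF lam, where B=us]) (use e usp Fl in auto)
      show ?thesis using c1 c2 e by (intro exI[of _ "us - e"] exI[of _ "0"]) auto
    qed
    show "solves_scalar lam a (\<lambda>n. if even n then 0 else allee_fp lam a)
      \<and> solves_scalar lam a (\<lambda>n. if even n then allee_fp lam a else 0)
      \<and> (\<forall>\<delta>>0. \<exists>x0 x1. 0 \<le> x0 \<and> 0 \<le> x1 \<and> dist (x0, x1) (0, allee_fp lam a) < \<delta>
                 \<and> (scal lam a x0 x1 \<longlonglongrightarrow> 0))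
      \<and> (\<forall>\<delta>>0. \<exists>x0 x1. 0 \<le> x0 \<and> 0 \<le> x1 \<and> dist (x0, x1) (allee_fp lam a, 0) < \<delta>
                 \<and> (scal lam a x0 x1 \<longlonglongrightarrow> 0))"
      using s1 s2 d1 d2 unfolding us_def by blast
  qed
  show ?thesis using A B C D unfolding T_def by blast
qed

end
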